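(* (i) Every invertible linear map $A:\mathcal{F}_p\to\mathcal{F}_c$ or $\mathcal{F}_c\to\mathcal{F}_p$, $f\mapsto fA$, preserves static equilibrium. Every projective duality of a statics problem can be described as the composition of a linear-map equivalence class $A_\sim=\{\lambda A:\lambda\ne0\}$ acting on the forces and an equilibrium preserving congruence of the force system, and every such composition gives a projective duality of the statics problem. (ii) Every invertible linear map $A:\mathcal{E}_p\to\mathcal{E}_c$ or $\mathcal{E}_c\to\mathcal{E}_p$, $e\mapsto eA$, preserves compatibility. Every projective duality of a kinematics problem can be described as the composition of a linear-map equivalence class acting on the velocities and a compatibility preserving congruence of the velocity system, and every such composition gives a projective duality of the kinematics problem.
   Context: Points of the real projective plane $PG(2)$ are classes of nonzero vectors of $\mathbb{R}^3$ up to nonzero scaling ($\vec p\in\mathbb{R}^2$ is $(\vec p,1)$, ideal points are $(\vec u,0)$); lines are also represented by nonzero vectors up to scaling, and $p$ lies on $l$ iff $\langle p,l\rangle=0$. A duality of $PG(2)$ maps points to lines and lines to points preserving incidence; it is given by an invertible $3\times 3$ matrix $A$ up to scaling, with points $p\mapsto$ lines $pA$ and lines $l\mapsto$ points $lA^{-T}$. Mechanical quantities (bodies in the $x,y$ plane): $\mathcal{F}_p$: coplanar force with components $F_x,F_y$ and moment $M_z$ about the origin is $f=(-F_y,F_x,M_z)$, representing its line of action. $\mathcal{F}_c$: force orthogonal to the plane with $z$-component $F_z$ and moments $M_x,M_y$ about the coordinate axes is $f=(-M_y,M_x,F_z)$, representing its point of action. $\mathcal{E}_c$: planar rigid motion with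 origin velocity $(v_x,v_y)$ and angular velocity $\omega_z$ is $e=(-v_y,v_x,\omega_z)$, representing the point of rotation. $\mathcal{E}_p$: motion with $z$-velocity $v_z$ of the origin and angular velocity components $\omega_x,\omega_y$ is $e=(-\omega_y,\omega_x,v_z)$, representing the line of rotation. Static equilibrium of a force system on a body means its vectors sum to $0$. Compatibility conditions have the form $\langle l,e_j-e_k\rangle=0$ (line $l$, in $\mathcal{E}_c$) or $\langle p,e_j-e_k\rangle=0$ (point $p$, in $\mathcal{E}_p$). A congruence of a force (velocity) system $\{f_i\}$ is $\{f_i\}\mapsto\{\psi_if_i\}$ with $\psi_i\neq0$; it is equilibrium (compatibility) preserving for a problem if equilibrium (compatibility) of all (sub)bodies is preserved. A projective duality of a statics (kinematics) problem is a transformation of the mechanical quantities such that points and lines of attack of the forces (velocities) are transformed into lines and points of attack according to one projective duality of $PG(2)$, and the image is in static equilibrium (compatible) if and only if the original is. *)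

theory Defs
  imports "HOL-Analysis.Analysis"
begin

text \<open>Vectors of R^3 are row vectors; x v* M is the row-vector/matrix product xM.\<close>

text \<open>Two nonzero vectors represent the same element (point or line) of PG(2).\<close>
definition proj_same :: "real^3 \<Rightarrow> real^3 \<Rightarrow> bool" where
  "proj_same u v \<longleftrightarrow> u \<noteq> 0 \<and> v \<noteq> 0 \<and> (\<exists>c. c \<noteq> 0 \<and> v = c *\<^sub>R u)"

text \<open>Image of an element under the projective duality given by the invertible matrix D:
  a point p is mapped to the line pD, a line l to the point l D^{-T}.\<close>
definition dual_img :: "bool \<Rightarrow> real^3^3 \<Rightarrow> real^3 \<Rightarrow> real^3" where
  "dual_img is_line D x = (if is_line then x v* matrix_inv (transpose D) else x v* D)"

text \<open>A statics problem: a set B of (sub)bodies, the force indices I, and for each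
  (sub)body b the set acts b of forces acting on it. A force system is f : I -> R^3.\<close>
definition statics_eq :: "'b set \<Rightarrow> ('b \<Rightarrow> 'i set) \<Rightarrow> ('i \<Rightarrow> real^3) \<Rightarrow> bool" where
  "statics_eq B acts f \<longleftrightarrow> (\<forall>b\<in>B. (\<Sum>i\<in>acts b. f i) = 0)"

definition eq_preserving_congruence ::
  "'b set \<Rightarrow> ('b \<Rightarrow> 'i set) \<Rightarrow> 'i set \<Rightarrow> ('i \<Rightarrow> real^3) \<Rightarrow> ('i \<Rightarrow> real) \<Rightarrow> bool" where
  "eq_preserving_congruence B acts I f \<psi> \<longleftrightarrow>
     (\<forall>i\<in>I. \<psi> i \<noteq> 0) \<and>
     (statics_eq B acts (\<lambda>i. \<psi> i *\<^sub>R f i) \<longleftrightarrow> statics_eq B acts f)"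

text \<open>g is a projective duality of the statics problem with force system f
  (f_is_line: forces are in F_p, i.e. represent lines of action; otherwise F_c, points).\<close>
definition statics_proj_duality ::
  "'b set \<Rightarrow> ('b \<Rightarrow> 'i set) \<Rightarrow> 'i set \<Rightarrow> bool \<Rightarrow> ('i \<Rightarrow> real^3) \<Rightarrow> ('i \<Rightarrow> real^3) \<Rightarrow> bool" where
  "statics_proj_duality B acts I f_is_line f g \<longleftrightarrow>
     (\<exists>D. invertible D \<and> (\<forall>i\<in>I. proj_same (dual_img f_is_line D (f i)) (g i))) \<and>
     (statics_eq B acts g \<longleftrightarrow> statics_eq B acts f)"

text \<open>A kinematics problem: body indices J, a set C of compatibility conditions
  (c, j, k) meaning <c, e_j - e_k> = 0, where c is a line (velocities in E_c) or a
  point (velocities in E_p).\<close>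
definition compatible :: "((real^3) \<times> 'j \<times> 'j) set \<Rightarrow> ('j \<Rightarrow> real^3) \<Rightarrow> bool" where
  "compatible C e \<longleftrightarrow> (\<forall>(c, j, k)\<in>C. c \<bullet> (e j - e k) = 0)"

definition conds_lin :: "real^3^3 \<Rightarrow> ((real^3) \<times> 'j \<times> 'j) set \<Rightarrow> ((real^3) \<times> 'j \<times> 'j) set" where
  "conds_lin A C = (\<lambda>(c, j, k). (c v* matrix_inv (transpose A), j, k)) ` C"

text \<open>Conditions transformed by the projective duality D (the condition elements are
  lines iff the velocities represent points).\<close>
definition conds_dual :: "bool \<Rightarrow> real^3^3 \<Rightarrow> ((real^3) \<times> 'j \<times> 'j) set \<Rightarrow> ((real^3) \<times> 'j \<times> 'j) set" where
  "conds_dual e_is_line D C = (\<lambda>(c, j, k). (dual_img (\<not> e_is_line) D c, j, k)) ` C"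

definition compat_preserving_congruence ::
  "((real^3) \<times> 'j \<times> 'j) set \<Rightarrow> 'j set \<Rightarrow> ('j \<Rightarrow> real^3) \<Rightarrow> ('j \<Rightarrow> real) \<Rightarrow> bool" where
  "compat_preserving_congruence C J e \<psi> \<longleftrightarrow>
     (\<forall>j\<in>J. \<psi> j \<noteq> 0) \<and>
     (compatible C (\<lambda>j. \<psi> j *\<^sub>R e j) \<longleftrightarrow> compatible C e)"

text \<open>g (for the transformed problem) is a projective duality of the kinematics problem
  (C, e) (e_is_line: velocities in E_p, representing lines; otherwise E_c, points).\<close>
definition kin_proj_duality ::
  "((real^3) \<times> 'j \<times> 'j) set \<Rightarrow> 'j set \<Rightarrow> bool \<Rightarrow> ('j \<Rightarrow> real^3) \<Rightarrow> ('j \<Rightarrow> real^3) \<Rightarrow> bool" where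
  "kin_proj_duality C J e_is_line e g \<longleftrightarrow>
     (\<exists>D. invertible D \<and> (\<forall>j\<in>J. proj_same (dual_img e_is_line D (e j)) (g j)) \<and>
          (compatible (conds_dual e_is_line D C) g \<longleftrightarrow> compatible C e))"

end

theory Submission
  imports Defs
begin

lemma minv_props:
  fixes A :: "real^3^3"
  assumes "invertible A"
  shows "A ** matrix_inv A = mat 1 \<and> matrix_inv A ** A = mat 1"
  using assms unfolding invertible_def matrix_inv_def by (rule someI_ex)

lemma minv_unique:
  fixes A B :: "real^3^3"
  assumes "A ** B = mat 1" "B ** A = mat 1"
  shows "matrix_inv A = B"
proof -
  have inv: "invertible A" using assms invertible_def by blast
  note p = minv_props[OF inv]
  have "matrix_inv A = matrix_inv A ** (A ** B)" using assms by simp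
  also have "\<dots> = (matrix_inv A ** A) ** B" by (simp add: matrix_mul_assoc)
  also have "\<dots> = B" using p by simp
  finally show ?thesis .
qed

lemma minv_invertible:
  fixes A :: "real^3^3"
  assumes "invertible A" shows "invertible (matrix_inv A)"
  using minv_props[OF assms] invertible_def by blast

lemma minv_minv:
  fixes A :: "real^3^3"
  assumes "invertible A" shows "matrix_inv (matrix_inv A) = A"
  using minv_props[OF assms] minv_unique by blast

lemma minv_transpose:
  fixes A :: "real^3^3"
  assumes "invertible A" shows "matrix_inv (transpose A) = transpose (matrix_inv A)"
proof -
  note p = minv_props[OF assms]
  have "transpose A ** transpose (matrix_inv A) = mat 1"
    by (metis p matrix_transpose_mul transpose_mat)
  moreover have "transpose (matrix_inv A) ** transpose A = mat 1"
    by (metis p matrix_transpose_mul transpose_mat)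
  ultimately show ?thesis by (rule minv_unique)
qed

lemma vm_nonzero:
  fixes A :: "real^3^3"
  assumes "invertible A" "x \<noteq> 0" shows "x v* A \<noteq> 0"
proof
  assume "x v* A = 0"
  then have "(x v* A) v* matrix_inv A = 0" by simp
  then show False using minv_props[OF assms(1)] assms(2)
    by (simp add: vector_matrix_mul_assoc)
qed

lemma vm_sum:
  fixes A :: "real^3^3"
  shows "(\<Sum>i\<in>S. f i v* A) = (\<Sum>i\<in>S. f i) v* A"
proof (cases "finite S")
  case True then show ?thesis
    by (induction S rule: finite_induct) (auto simp: vector_matrix_left_distrib)
qed simp

lemma statics_lin:
  fixes A :: "real^3^3"
  assumes "invertible A" "\<forall>b\<in>B. acts b \<subseteq> I"
  shows "statics_eq B acts (\<lambda>i. f i v* A) \<longleftrightarrow> statics_eq B acts f"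
proof -
  have "\<And>v::real^3. v v* A = 0 \<longleftrightarrow> v = 0"
    using vm_nonzero[OF assms(1)] by fastforce
  then show ?thesis unfolding statics_eq_def by (simp add: vm_sum)
qed

lemma statics_cong:
  assumes "\<forall>b\<in>B. acts b \<subseteq> I" "\<forall>i\<in>I. g i = h i"
  shows "statics_eq B acts g \<longleftrightarrow> statics_eq B acts h"
proof -
  have "(\<Sum>i\<in>acts b. g i) = (\<Sum>i\<in>acts b. h i)" if "b \<in> B" for b
  proof (rule sum.cong)
    show "g x = h x" if "x \<in> acts b" for x
      using assms \<open>b \<in> B\<close> that by blast
  qed simp
  then show ?thesis unfolding statics_eq_def by simp
qed

lemma inner_lin:
  fixes A :: "real^3^3"
  assumes "invertible A"
  shows "(c v* matrix_inv (transpose A)) \<bullet> (x v* A) = c \<bullet> x"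
proof -
  have t: "invertible (transpose A)" by (rule transpose_invertible[OF assms])
  have "(c v* matrix_inv (transpose A)) \<bullet> (x v* A)
      = c \<bullet> (matrix_inv (transpose A) *v (transpose A *v x))"
    by (simp only: dot_lmul_matrix transpose_matrix_vector)
  also have "\<dots> = c \<bullet> ((matrix_inv (transpose A) ** transpose A) *v x)"
    by (simp only: matrix_vector_mul_assoc)
  also have "\<dots> = c \<bullet> x" using minv_props[OF t] by simp
  finally show ?thesis .
qed

lemma compat_lin:
  fixes A :: "real^3^3"
  assumes "invertible A"
  shows "compatible (conds_lin A C) (\<lambda>j. e j v* A) \<longleftrightarrow> compatible C e"
proof -
  have eq: "(c v* matrix_inv (transpose A)) \<bullet> (x v* A - y v* A) = c \<bullet> (x - y)" for c x y
    by (simp only: vector_matrix_mult_diff_distrib[symmetric] inner_lin[OF assms])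
  show ?thesis unfolding compatible_def conds_lin_def
    by (simp add: eq split_beta)
qed

lemma compat_cong:
  assumes "\<forall>(c, j, k)\<in>C. j \<in> J \<and> k \<in> J" "\<forall>j\<in>J. g j = h j"
  shows "compatible C g \<longleftrightarrow> compatible C h"
proof -
  have "c \<bullet> (g j - g k) = c \<bullet> (h j - h k)" if "(c, j, k) \<in> C" for c j k
    using assms that by fastforce
  then show ?thesis unfolding compatible_def by auto
qed

definition TT :: "bool \<Rightarrow> real^3^3 \<Rightarrow> real^3^3" where
  "TT b D = (if b then matrix_inv (transpose D) else D)"

definition UU :: "bool \<Rightarrow> real^3^3 \<Rightarrow> real^3^3" where
  "UU b A = (if b then transpose (matrix_inv A) else A)"

lemma dual_TT: "dual_img b D x = x v* TT b D"
  unfolding dual_img_def TT_def by simp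

lemma TT_inv: "invertible D \<Longrightarrow> invertible (TT b D)"
  unfolding TT_def using minv_invertible transpose_invertible by auto

lemma UU_inv: "invertible A \<Longrightarrow> invertible (UU b A)"
  unfolding UU_def using minv_invertible transpose_invertible by auto

lemma TT_UU: "invertible A \<Longrightarrow> TT b (UU b A) = A"
  unfolding TT_def UU_def
  by (simp add: minv_transpose[symmetric] minv_invertible transpose_invertible minv_minv)

lemma conds_TT:
  assumes "invertible D"
  shows "conds_dual b D C = conds_lin (TT b D) C"
proof -
  have "dual_img (\<not> b) D c = c v* matrix_inv (transpose (TT b D))" for c
  proof (cases b)
    case True
    have "transpose (matrix_inv (transpose D)) = matrix_inv D"
      using minv_transpose[OF assms] by simp
    then show ?thesis using True
      by (simp add: dual_img_def TT_def minv_minv[OF assms])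
  qed (simp add: dual_img_def TT_def)
  then show ?thesis unfolding conds_dual_def conds_lin_def by simp
qed

lemma proj_same_ex:
  assumes "u \<noteq> 0"
  shows "proj_same u v \<longleftrightarrow> (\<exists>c. c \<noteq> 0 \<and> v = c *\<^sub>R u)"
  using assms unfolding proj_same_def by auto

theorem theorem4:
  fixes B :: "'b set" and acts :: "'b \<Rightarrow> 'i set" and I :: "'i set"
    and f :: "'i \<Rightarrow> real^3" and f_is_line :: bool
    and C :: "((real^3) \<times> 'j \<times> 'j) set" and J :: "'j set"
    and e :: "'j \<Rightarrow> real^3" and e_is_line :: bool
  assumes "finite I" and "\<forall>b\<in>B. acts b \<subseteq> I" and "\<forall>i\<in>I. f i \<noteq> 0"
    and "\<forall>(c, j, k)\<in>C. c \<noteq> 0 \<and> j \<in> J \<and> k \<in> J" and "\<forall>j\<in>J. e j \<noteq> 0"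
  shows
    "((\<forall>A::real^3^3. invertible A \<longrightarrow>
         (statics_eq B acts (\<lambda>i. f i v* A) \<longleftrightarrow> statics_eq B acts f)) \<and>
      (\<forall>g. statics_proj_duality B acts I f_is_line f g \<longleftrightarrow>
         (\<exists>(A::real^3^3) \<psi>. invertible A \<and>
            eq_preserving_congruence B acts I (\<lambda>i. f i v* A) \<psi> \<and>
            (\<forall>i\<in>I. g i = \<psi> i *\<^sub>R (f i v* A)))))
     \<and>
     ((\<forall>A::real^3^3. invertible A \<longrightarrow>
         (compatible (conds_lin A C) (\<lambda>j. e j v* A) \<longleftrightarrow> compatible C e)) \<and>
      (\<forall>g. kin_proj_duality C J e_is_line e g \<longleftrightarrow>
         (\<exists>(A::real^3^3) \<psi>. invertible A \<and>
            compat_preserving_congruence (conds_lin A C) J (\<lambda>j. e j v* A) \<psi> \<and>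
            (\<forall>j\<in>J. g j = \<psi> j *\<^sub>R (e j v* A)))))"
proof (intro conjI allI impI)
  fix A :: "real^3^3" assume "invertible A"
  then show "statics_eq B acts (\<lambda>i. f i v* A) \<longleftrightarrow> statics_eq B acts f"
    by (rule statics_lin[OF _ assms(2)])
next
  fix A :: "real^3^3" assume "invertible A"
  then show "compatible (conds_lin A C) (\<lambda>j. e j v* A) \<longleftrightarrow> compatible C e"
    by (rule compat_lin)
next
  fix g
  show "statics_proj_duality B acts I f_is_line f g \<longleftrightarrow>
         (\<exists>(A::real^3^3) \<psi>. invertible A \<and>
            eq_preserving_congruence B acts I (\<lambda>i. f i v* A) \<psi> \<and>
            (\<forall>i\<in>I. g i = \<psi> i *\<^sub>R (f i v* A)))"
  proof
    assume "statics_proj_duality B acts I f_is_line f g"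
    then have ex: "\<exists>D. invertible D \<and> (\<forall>i\<in>I. proj_same (dual_img f_is_line D (f i)) (g i))"
      and eq: "statics_eq B acts g \<longleftrightarrow> statics_eq B acts f"
      unfolding statics_proj_duality_def by simp_all
    from ex obtain D where D1: "invertible D"
      and D2: "\<forall>i\<in>I. proj_same (dual_img f_is_line D (f i)) (g i)" by blast
    define A where "A = TT f_is_line D"
    have A: "invertible A" using TT_inv[OF D1] A_def by simp
    have "\<forall>i\<in>I. \<exists>c. c \<noteq> 0 \<and> g i = c *\<^sub>R (f i v* A)"
      using D2 unfolding A_def proj_same_def dual_TT by blast
    then obtain \<psi> where psi: "\<forall>i\<in>I. \<psi> i \<noteq> 0 \<and> g i = \<psi> i *\<^sub>R (f i v* A)"
      using bchoice[of I "\<lambda>i c. c \<noteq> 0 \<and> g i = c *\<^sub>R (f i v* A)"] by blast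
    have s1: "statics_eq B acts (\<lambda>i. \<psi> i *\<^sub>R (f i v* A)) \<longleftrightarrow> statics_eq B acts g"
      using statics_cong[OF assms(2), of "\<lambda>i. \<psi> i *\<^sub>R (f i v* A)" g] psi by simp
    have s2: "statics_eq B acts (\<lambda>i. f i v* A) \<longleftrightarrow> statics_eq B acts f"
      using statics_lin[OF A assms(2)] .
    have cg: "eq_preserving_congruence B acts I (\<lambda>i. f i v* A) \<psi>"
      unfolding eq_preserving_congruence_def using psi s1 s2 eq by simp
    show "\<exists>(A::real^3^3) \<psi>. invertible A \<and>
            eq_preserving_congruence B acts I (\<lambda>i. f i v* A) \<psi> \<and>
            (\<forall>i\<in>I. g i = \<psi> i *\<^sub>R (f i v* A))"
      by (intro exI[of _ A] exI[of _ \<psi>] conjI A cg) (simp add: psi)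
  next
    assume "\<exists>(A::real^3^3) \<psi>. invertible A \<and>
            eq_preserving_congruence B acts I (\<lambda>i. f i v* A) \<psi> \<and>
            (\<forall>i\<in>I. g i = \<psi> i *\<^sub>R (f i v* A))"
    then obtain A :: "real^3^3" and \<psi> where A: "invertible A"
      and cg: "eq_preserving_congruence B acts I (\<lambda>i. f i v* A) \<psi>"
      and g: "\<forall>i\<in>I. g i = \<psi> i *\<^sub>R (f i v* A)" by blast
    have psi0: "\<forall>i\<in>I. \<psi> i \<noteq> 0" and cgi:
      "statics_eq B acts (\<lambda>i. \<psi> i *\<^sub>R (f i v* A)) \<longleftrightarrow> statics_eq B acts (\<lambda>i. f i v* A)"
      using cg unfolding eq_preserving_congruence_def by auto
    define D where "D = UU f_is_line A"
    have D: "invertible D" using UU_inv[OF A] D_def by simp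
    have T: "TT f_is_line D = A" using TT_UU[OF A] D_def by simp
    have ps: "\<forall>i\<in>I. proj_same (dual_img f_is_line D (f i)) (g i)"
    proof
      fix i assume i: "i \<in> I"
      have "f i v* A \<noteq> 0" using vm_nonzero[OF A] assms(3) i by blast
      then show "proj_same (dual_img f_is_line D (f i)) (g i)"
        unfolding dual_TT T proj_same_ex[OF \<open>f i v* A \<noteq> 0\<close>]
        using g psi0 i by blast
    qed
    have s1: "statics_eq B acts (\<lambda>i. \<psi> i *\<^sub>R (f i v* A)) \<longleftrightarrow> statics_eq B acts g"
      using statics_cong[OF assms(2), of "\<lambda>i. \<psi> i *\<^sub>R (f i v* A)" g] g by simp
    have s2: "statics_eq B acts (\<lambda>i. f i v* A) \<longleftrightarrow> statics_eq B acts f"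
      using statics_lin[OF A assms(2)] .
    have "statics_eq B acts g \<longleftrightarrow> statics_eq B acts f" using s1 s2 cgi by simp
    then show "statics_proj_duality B acts I f_is_line f g"
      unfolding statics_proj_duality_def by (intro conjI exI[of _ D] D ps)
  qed
next
  fix g
  have CJ: "\<forall>(c, j, k)\<in>C. j \<in> J \<and> k \<in> J" using assms(4) by auto
  have CJ': "\<forall>(c, j, k)\<in>conds_lin A C. j \<in> J \<and> k \<in> J" for A
    using CJ unfolding conds_lin_def by auto
  show "kin_proj_duality C J e_is_line e g \<longleftrightarrow>
         (\<exists>(A::real^3^3) \<psi>. invertible A \<and>
            compat_preserving_congruence (conds_lin A C) J (\<lambda>j. e j v* A) \<psi> \<and>
            (\<forall>j\<in>J. g j = \<psi> j *\<^sub>R (e j v* A)))"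
  proof
    assume "kin_proj_duality C J e_is_line e g"
    from this[unfolded kin_proj_duality_def] obtain D where
      DD: "invertible D \<and> (\<forall>j\<in>J. proj_same (dual_img e_is_line D (e j)) (g j)) \<and>
          (compatible (conds_dual e_is_line D C) g \<longleftrightarrow> compatible C e)" ..
    have D1: "invertible D"
      and D2: "\<forall>j\<in>J. proj_same (dual_img e_is_line D (e j)) (g j)"
      and eq: "compatible (conds_dual e_is_line D C) g \<longleftrightarrow> compatible C e"
      using DD by simp_all
    define A where "A = TT e_is_line D"
    have A: "invertible A" using TT_inv[OF D1] A_def by simp
    have eq': "compatible (conds_lin A C) g \<longleftrightarrow> compatible C e"
      using eq by (simp add: A_def conds_TT[OF D1])
    have "\<forall>j\<in>J. \<exists>c. c \<noteq> 0 \<and> g j = c *\<^sub>R (e j v* A)"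
      using D2 unfolding A_def proj_same_def dual_TT by blast
    then obtain \<psi> where psi: "\<forall>j\<in>J. \<psi> j \<noteq> 0 \<and> g j = \<psi> j *\<^sub>R (e j v* A)"
      using bchoice[of J "\<lambda>j c. c \<noteq> 0 \<and> g j = c *\<^sub>R (e j v* A)"] by blast
    have k1: "compatible (conds_lin A C) (\<lambda>j. \<psi> j *\<^sub>R (e j v* A)) \<longleftrightarrow> compatible (conds_lin A C) g"
      using compat_cong[OF CJ'[of A], of "\<lambda>j. \<psi> j *\<^sub>R (e j v* A)" g] psi by simp
    have k2: "compatible (conds_lin A C) (\<lambda>j. e j v* A) \<longleftrightarrow> compatible C e"
      using compat_lin[OF A] .
    have cg: "compat_preserving_congruence (conds_lin A C) J (\<lambda>j. e j v* A) \<psi>"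
      unfolding compat_preserving_congruence_def using psi k1 k2 eq' by simp
    show "\<exists>(A::real^3^3) \<psi>. invertible A \<and>
            compat_preserving_congruence (conds_lin A C) J (\<lambda>j. e j v* A) \<psi> \<and>
            (\<forall>j\<in>J. g j = \<psi> j *\<^sub>R (e j v* A))"
      by (intro exI[of _ A] exI[of _ \<psi>] conjI A cg) (simp add: psi)
  next
    assume "\<exists>(A::real^3^3) \<psi>. invertible A \<and>
            compat_preserving_congruence (conds_lin A C) J (\<lambda>j. e j v* A) \<psi> \<and>
            (\<forall>j\<in>J. g j = \<psi> j *\<^sub>R (e j v* A))"
    then obtain A :: "real^3^3" and \<psi> where A: "invertible A"
      and cg: "compat_preserving_congruence (conds_lin A C) J (\<lambda>j. e j v* A) \<psi>"
      and g: "\<forall>j\<in>J. g j = \<psi> j *\<^sub>R (e j v* A)" by blast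
    have psi0: "\<forall>j\<in>J. \<psi> j \<noteq> 0" and cgi:
      "compatible (conds_lin A C) (\<lambda>j. \<psi> j *\<^sub>R (e j v* A)) \<longleftrightarrow> compatible (conds_lin A C) (\<lambda>j. e j v* A)"
      using cg unfolding compat_preserving_congruence_def by auto
    define D where "D = UU e_is_line A"
    have D: "invertible D" using UU_inv[OF A] D_def by simp
    have T: "TT e_is_line D = A" using TT_UU[OF A] D_def by simp
    have ps: "\<forall>j\<in>J. proj_same (dual_img e_is_line D (e j)) (g j)"
    proof
      fix j assume j: "j \<in> J"
      have "e j v* A \<noteq> 0" using vm_nonzero[OF A] assms(5) j by blast
      then show "proj_same (dual_img e_is_line D (e j)) (g j)"
        unfolding dual_TT T proj_same_ex[OF \<open>e j v* A \<noteq> 0\<close>]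
        using g psi0 j by blast
    qed
    have cd: "conds_dual e_is_line D C = conds_lin A C"
      by (simp add: conds_TT[OF D] T)
    have k1: "compatible (conds_lin A C) (\<lambda>j. \<psi> j *\<^sub>R (e j v* A)) \<longleftrightarrow> compatible (conds_lin A C) g"
      using compat_cong[OF CJ'[of A], of "\<lambda>j. \<psi> j *\<^sub>R (e j v* A)" g] g by simp
    have k2: "compatible (conds_lin A C) (\<lambda>j. e j v* A) \<longleftrightarrow> compatible C e"
      using compat_lin[OF A] .
    have "compatible (conds_dual e_is_line D C) g \<longleftrightarrow> compatible C e"
      using k1 k2 cgi unfolding cd by simp
    then show "kin_proj_duality C J e_is_line e g"
      unfolding kin_proj_duality_def by (intro conjI exI[of _ D] D ps)
  qed
qed

end
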